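(* Let $\pi\in RC(n)$. (1) If $n\ge 3$ is odd and $\pi$ is alternating, then $\{\pi_1,\pi_n\}=\{\frac{n-1}{2},\frac{n+1}{2}\}$, $\{\pi_j : 1<j<n,\ j\text{ odd}\}=\{1,\dots,\frac{n-3}{2}\}$, and $\{\pi_j: 1<j<n,\ j\text{ even}\}=\{\frac{n+3}{2},\dots,n\}$. (2) If $n\ge 3$ is odd and $\pi$ is reverse-alternating, then $\{\pi_1,\pi_n\}=\{\frac{n+1}{2},\frac{n+3}{2}\}$, $\{\pi_j: 1<j<n,\ j\text{ odd}\}=\{\frac{n+5}{2},\dots,n\}$, and $\{\pi_j: 1<j<n,\ j\text{ even}\}=\{1,\dots,\frac{n-1}{2}\}$. (3) If $n\ge 2$ is even and $\pi$ is alternating, then $\{\pi_1,\pi_n\}=\{\frac n2,\frac n2+1\}$, $\{\pi_j: 1<j<n,\ j\text{ odd}\}=\{1,\dots,\frac n2-1\}$, and $\{\pi_j: 1<j<n,\ j\text{ even}\}=\{\frac n2+2,\dots,n\}$. (4) If $n\ge 2$ is even and $\pi$ is reverse-alternating, then $\{\pi_1,\pi_n\}=\{\frac n2,\frac n2+1\}$, $\{\pi_j: 1<j<n,\ j\text{ odd}\}=\{\frac n2+2,\dots,n\}$, and $\{\pi_j: 1<j<n,\ j\text{ even}\}=\{1,\dots,\frac n2-1\}$. (Here $\{a,\dots,b\}$ with $a>b$ denotes the empty set.)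
   Context: Permutations of $[n]=\{1,\dots,n\}$ are written in one-line notation $\pi=(\pi_1,\dots,\pi_n)$; $S_n$ is the set of all of them. $\pi$ is alternating if $\pi_1<\pi_2>\pi_3<\cdots$ and reverse-alternating if $\pi_1>\pi_2<\pi_3>\cdots$. For a sequence $\tau=(\tau_1,\dots,\tau_m)$ of distinct numbers with $m\ge 2$, let $i(\tau)$ be the number of maximal increasing runs of consecutive entries of length at least $2$, and $d(\tau)$ the number of maximal decreasing runs of consecutive entries of length at least $2$; set $id(\tau)=i(\tau)+d(\tau)$. Equivalently, $id(\tau)=1+\#\{k: 2\le k\le m-1,\ (\tau_k-\tau_{k-1})(\tau_{k+1}-\tau_k)<0\}$. For $\pi\in S_n$, let $X(\pi)$ be the collection of all subsequences $\tau=(\pi_{j_1},\dots,\pi_{j_m})$ with $j_1<\dots<j_m$ and $m\ge 3$, and $t(\pi)=\sum_{\tau\in X(\pi)} id(\tau)$. Define $RC(n)=\{\pi\in S_n : t(\pi)=\max_{\sigma\in S_n} t(\sigma)\}$. *)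

theory Defs
  imports Main
begin

text \<open>Permutations of [n] in one-line notation, as lists: the entry pi_j is xs ! (j-1).\<close>
definition Sn :: "nat \<Rightarrow> nat list set" where
  "Sn n = {xs. distinct xs \<and> set xs = {1..n}}"

definition alternating :: "nat list \<Rightarrow> bool" where
  "alternating xs \<longleftrightarrow> (\<forall>k. k + 1 < length xs \<longrightarrow>
      (if even k then xs ! k < xs ! (k+1) else xs ! k > xs ! (k+1)))"

definition rev_alternating :: "nat list \<Rightarrow> bool" where
  "rev_alternating xs \<longleftrightarrow> (\<forall>k. k + 1 < length xs \<longrightarrow>
      (if even k then xs ! k > xs ! (k+1) else xs ! k < xs ! (k+1)))"

definition idr :: "nat list \<Rightarrow> nat" where
  "idr ts = 1 + card {k. 1 \<le> k \<and> k + 1 < length ts \<and>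
      (int (ts ! k) - int (ts ! (k-1))) * (int (ts ! (k+1)) - int (ts ! k)) < 0}"

definition tstat :: "nat list \<Rightarrow> nat" where
  "tstat xs = (\<Sum>J\<in>{J. J \<subseteq> {0..<length xs} \<and> card J \<ge> 3}. idr (nths xs J))"

definition RC :: "nat \<Rightarrow> nat list set" where
  "RC n = {xs \<in> Sn n. tstat xs = Max (tstat ` Sn n)}"

end

theory Submission
  imports Defs
begin

lemma nths_conv: "nths xs A = map ((!) xs) (filter (\<lambda>i. i\<in>A) [0..<length xs])"
proof (induction xs rule: rev_induct)
  case Nil then show ?case by simp
next
  case (snoc x xs)
  have "map ((!) (xs @ [x])) (filter (\<lambda>i. i\<in>A) [0..<length xs]) = map ((!) xs) (filter (\<lambda>i. i\<in>A) [0..<length xs])"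
    by (rule map_cong) (auto simp: nth_append)
  then show ?case using snoc by (simp add: nths_append)
qed

definition turn :: "nat list \<Rightarrow> nat \<Rightarrow> nat \<Rightarrow> nat \<Rightarrow> bool" where
  "turn xs a b c \<longleftrightarrow> (int (xs!b) - int (xs!a)) * (int (xs!c) - int (xs!b)) < 0"

definition consec :: "nat set \<Rightarrow> nat \<Rightarrow> nat \<Rightarrow> nat \<Rightarrow> bool" where
  "consec J a b c \<longleftrightarrow> a\<in>J \<and> b\<in>J \<and> c\<in>J \<and> a<b \<and> b<c \<and> (\<forall>x\<in>J. \<not>(a<x \<and> x<b) \<and> \<not>(b<x \<and> x<c))"

lemma sorted_less_iff:
  assumes "sorted_wrt (<) (js::nat list)" "p < length js" "q < length js"
  shows "js!p < js!q \<longleftrightarrow> p < q"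
  using sorted_wrt_nth_less[OF assms(1)] assms
  by (metis less_asym' nat_neq_iff)

lemma idr_nths:
  assumes J: "J \<subseteq> {0..<length xs}"
  shows "idr (nths xs J) = 1 + card {(a,b,c). consec J a b c \<and> turn xs a b c}"
proof -
  define js where "js = filter (\<lambda>i. i\<in>J) [0..<length xs]"
  have srt: "sorted_wrt (<) js" unfolding js_def
    by (simp add: sorted_wrt_filter)
  have setjs: "set js = J" using J unfolding js_def by auto
  have ltn: "\<And>t. t < length js \<Longrightarrow> js!t < length xs"
    using setjs J nth_mem by fastforce
  define K where "K = {k. 1 \<le> k \<and> k+1 < length js \<and> turn xs (js!(k-1)) (js!k) (js!(k+1))}"
  have "idr (nths xs J) = 1 + card K"
    unfolding idr_def nths_conv js_def[symmetric] K_def turn_def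
    by (rule arg_cong[where f="\<lambda>S. 1 + card S"], rule Collect_cong) auto
  moreover have "card K = card {(a,b,c). consec J a b c \<and> turn xs a b c}"
  proof (rule bij_betw_same_card[where f="\<lambda>k. (js!(k-1), js!k, js!(k+1))"])
    show "bij_betw (\<lambda>k. (js!(k-1), js!k, js!(k+1))) K {(a,b,c). consec J a b c \<and> turn xs a b c}"
      unfolding bij_betw_def
    proof
      show "inj_on (\<lambda>k. (js!(k-1), js!k, js!(k+1))) K"
      proof (rule inj_onI)
        fix x y assume "x \<in> K" "y \<in> K" "(js!(x-1), js!x, js!(x+1)) = (js!(y-1), js!y, js!(y+1))"
        then have "js!x = js!y" "x < length js" "y < length js" by (auto simp: K_def)
        then show "x = y" using sorted_less_iff[OF srt] by (metis less_irrefl nat_neq_iff)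
      qed
    next
      show "(\<lambda>k. (js!(k-1), js!k, js!(k+1))) ` K = {(a,b,c). consec J a b c \<and> turn xs a b c}"
      proof
        show "(\<lambda>k. (js!(k-1), js!k, js!(k+1))) ` K \<subseteq> {(a,b,c). consec J a b c \<and> turn xs a b c}"
        proof
          fix t assume "t \<in> (\<lambda>k. (js!(k-1), js!k, js!(k+1))) ` K"
          then obtain k where k: "k \<in> K" "t = (js!(k-1), js!k, js!(k+1))" by blast
          have k1: "1 \<le> k" "k+1 < length js" using k by (auto simp: K_def)
          have m: "js!(k-1) \<in> J" "js!k \<in> J" "js!(k+1) \<in> J" using k1 setjs nth_mem
              by (metis add_lessD1 less_imp_diff_less)+
          have o: "js!(k-1) < js!k" "js!k < js!(k+1)" using k1 sorted_less_iff[OF srt] by auto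
          have b: "\<forall>x\<in>J. \<not>(js!(k-1) < x \<and> x < js!k) \<and> \<not>(js!k < x \<and> x < js!(k+1))"
          proof
            fix x assume "x \<in> J"
            then obtain u where u: "u < length js" "x = js!u" using setjs by (metis in_set_conv_nth)
            show "\<not>(js!(k-1) < x \<and> x < js!k) \<and> \<not>(js!k < x \<and> x < js!(k+1))"
              using k1 u sorted_less_iff[OF srt] by auto
          qed
          have c: "consec J (js!(k-1)) (js!k) (js!(k+1))"
            unfolding consec_def using m o b by blast
          then show "t \<in> {(a,b,c). consec J a b c \<and> turn xs a b c}" using k by (auto simp: K_def)
        qed
      next
        show "{(a,b,c). consec J a b c \<and> turn xs a b c} \<subseteq> (\<lambda>k. (js!(k-1), js!k, js!(k+1))) ` K"
        proof clarify
          fix a b c assume cc: "consec J a b c" and tt: "turn xs a b c"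
          obtain ta where ta: "ta < length js" "a = js!ta" using cc setjs unfolding consec_def by (metis in_set_conv_nth)
          obtain tb where tb: "tb < length js" "b = js!tb" using cc setjs unfolding consec_def by (metis in_set_conv_nth)
          obtain tc where tc: "tc < length js" "c = js!tc" using cc setjs unfolding consec_def by (metis in_set_conv_nth)
          have o1: "ta < tb" "tb < tc" using cc ta tb tc sorted_less_iff[OF srt] unfolding consec_def by auto
          have "ta = tb - 1"
          proof (rule ccontr)
            assume "ta \<noteq> tb - 1"
            then have "ta < tb - 1" "tb - 1 < tb" using o1 by auto
            then have "a < js!(tb-1)" "js!(tb-1) < b" using ta tb sorted_less_iff[OF srt] by auto
            moreover have "js!(tb-1) \<in> J" using tb setjs nth_mem by (metis less_imp_diff_less)
            ultimately show False using cc unfolding consec_def by blast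
          qed
          moreover have "tc = tb + 1"
          proof (rule ccontr)
            assume "tc \<noteq> tb + 1"
            then have "tb < tb + 1" "tb + 1 < tc" using o1 by auto
            then have "b < js!(tb+1)" "js!(tb+1) < c" using tc tb sorted_less_iff[OF srt] by auto
            moreover have "js!(tb+1) \<in> J" using tc \<open>tb + 1 < tc\<close> setjs nth_mem by (metis less_trans)
            ultimately show False using cc unfolding consec_def by blast
          qed
          ultimately have "tb \<in> K" using tt ta tb tc o1 by (auto simp: K_def)
          then show "(a,b,c) \<in> (\<lambda>k. (js!(k-1), js!k, js!(k+1))) ` K"
            using \<open>ta = tb - 1\<close> \<open>tc = tb + 1\<close> ta tb tc by (intro image_eqI[where x=tb]) auto
        qed
      qed
    qed
  qed
  ultimately show ?thesis by simp
qed

lemma count_consec: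
  assumes "a<b" "b<c" "c<n"
  shows "card {J. J \<subseteq> {0..<n} \<and> consec J a b c} = 2^a * 2^(n-1-c)"
proof -
  define g where "g = (\<lambda>(A::nat set,B::nat set). A \<union> {a,b,c} \<union> B)"
  have inj: "inj_on g (Pow {..<a} \<times> Pow {c<..<n})"
  proof (rule inj_onI)
    fix x y assume hx: "x \<in> Pow {..<a} \<times> Pow {c<..<n}" and hy: "y \<in> Pow {..<a} \<times> Pow {c<..<n}"
      and hg: "g x = g y"
    obtain A B where x: "x = (A,B)" by (cases x)
    obtain A' B' where y: "y = (A',B')" by (cases y)
    have h: "A \<in> Pow {..<a}" "B \<in> Pow {c<..<n}" "A' \<in> Pow {..<a}" "B' \<in> Pow {c<..<n}"
      "g (A,B) = g (A',B')" using hx hy hg x y by auto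
    have "A = g (A,B) \<inter> {..<a}" "A' = g (A',B') \<inter> {..<a}"
      using h(1-4) assms by (auto simp: g_def)
    moreover have "B = g (A,B) \<inter> {c<..}" "B' = g (A',B') \<inter> {c<..}"
      using h(1-4) assms by (auto simp: g_def)
    ultimately show "x = y" using h(5) x y by metis
  qed
  have img: "g ` (Pow {..<a} \<times> Pow {c<..<n}) = {J. J \<subseteq> {0..<n} \<and> consec J a b c}"
  proof
    show "g ` (Pow {..<a} \<times> Pow {c<..<n}) \<subseteq> {J. J \<subseteq> {0..<n} \<and> consec J a b c}"
      using assms by (auto simp: g_def consec_def)
  next
    show "{J. J \<subseteq> {0..<n} \<and> consec J a b c} \<subseteq> g ` (Pow {..<a} \<times> Pow {c<..<n})"
    proof clarify
      fix J assume J: "J \<subseteq> {0..<n}" "consec J a b c"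
      have "J = g (J \<inter> {..<a}, J \<inter> {c<..<n})"
        using J unfolding g_def consec_def by (auto simp: subset_iff)
      then show "J \<in> g ` (Pow {..<a} \<times> Pow {c<..<n})" by blast
    qed
  qed
  have "card {J. J \<subseteq> {0..<n} \<and> consec J a b c} = card (Pow {..<a} \<times> Pow {c<..<n})"
    using card_image[OF inj] img by simp
  also have "\<dots> = 2^a * 2^(n-1-c)"
    by (simp add: card_cartesian_product card_Pow)
  finally show ?thesis .
qed

definition Trip :: "nat \<Rightarrow> (nat \<times> nat \<times> nat) set" where
  "Trip n = {(a,b,c). a<b \<and> b<c \<and> c<n}"

lemma finite_Trip: "finite (Trip n)"
proof -
  have "Trip n \<subseteq> {..<n} \<times> {..<n} \<times> {..<n}" by (auto simp: Trip_def)
  then show ?thesis by (rule finite_subset) auto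
qed

definition Wt :: "nat list \<Rightarrow> nat" where
  "Wt xs = (\<Sum>(a,b,c)\<in>Trip (length xs). if turn xs a b c then 2^a * 2^(length xs - 1 - c) else 0)"

lemma card_ge3: "J \<subseteq> {0..<n} \<Longrightarrow> consec J a b c \<Longrightarrow> 3 \<le> card J"
proof -
  assume J: "J \<subseteq> {0..<n}" "consec J a b c"
  have "{a,b,c} \<subseteq> J" "finite J" using J finite_subset by (auto simp: consec_def)
  then have "card {a,b,c} \<le> card J" by (rule card_mono[rotated])
  moreover have "card {a,b,c} = 3" using J by (auto simp: consec_def)
  ultimately show ?thesis by simp
qed

lemma tstat_Wt:
  "tstat xs = card {J. J \<subseteq> {0..<length xs} \<and> card J \<ge> 3} + Wt xs"
proof -
  define n where "n = length xs"
  define F where "F = {J. J \<subseteq> {0..<n} \<and> card J \<ge> 3}"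
  define S where "S = (\<lambda>J. {(a,b,c). consec J a b c \<and> turn xs a b c})"
  have finF: "finite F" unfolding F_def
    by (rule finite_subset[of _ "Pow {0..<n}"]) auto
  have SsubT: "J \<in> F \<Longrightarrow> S J \<subseteq> Trip n" for J
    by (auto simp: S_def F_def Trip_def consec_def)
  have "tstat xs = (\<Sum>J\<in>F. 1 + card (S J))"
    unfolding tstat_def n_def[symmetric] F_def[symmetric]
    by (rule sum.cong) (auto simp: F_def S_def n_def idr_nths)
  also have "\<dots> = card F + (\<Sum>J\<in>F. card (S J))" by (simp add: sum.distrib del: One_nat_def)
  also have "(\<Sum>J\<in>F. card (S J)) = (\<Sum>J\<in>F. \<Sum>t\<in>Trip n. if t \<in> S J then 1 else 0)"
  proof (rule sum.cong[OF refl])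
    fix J assume "J \<in> F"
    then have "{t \<in> Trip n. t \<in> S J} = S J" using SsubT by blast
    then show "card (S J) = (\<Sum>t\<in>Trip n. if t \<in> S J then 1 else 0)"
      using sum.inter_filter[OF finite_Trip[of n], where g="\<lambda>_. 1::nat" and P="\<lambda>t. t \<in> S J"] by simp
  qed
  also have "\<dots> = (\<Sum>t\<in>Trip n. \<Sum>J\<in>F. if t \<in> S J then 1 else 0)" by (rule sum.swap)
  also have "\<dots> = (\<Sum>t\<in>Trip n. card {J \<in> F. t \<in> S J})"
    by (rule sum.cong[OF refl]) (simp add: sum.inter_filter[OF finF, symmetric])
  also have "\<dots> = Wt xs"
    unfolding Wt_def n_def[symmetric]
  proof (rule sum.cong[OF refl], clarify)
    fix a b c assume t: "(a,b,c) \<in> Trip n"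
    have "{J \<in> F. (a,b,c) \<in> S J} = (if turn xs a b c then {J. J \<subseteq> {0..<n} \<and> consec J a b c} else {})"
      by (auto simp: F_def S_def card_ge3)
    then show "card {J \<in> F. (a,b,c) \<in> S J} = (if turn xs a b c then 2^a * 2^(n - 1 - c) else 0)"
      using t count_consec by (auto simp: Trip_def)
  qed
  finally show ?thesis unfolding F_def n_def .
qed

lemma geo2: "(\<Sum>a<l. (2::int)^a) = 2^l - 1"
  by (induction l) auto

lemma geo1: "h < m \<Longrightarrow> (\<Sum>c\<in>{h<..<m}. (2::int)^(m-1-c)) = 2^(m-1-h) - 1"
proof (induction m)
  case 0 then show ?case by simp
next
  case (Suc m)
  show ?case
  proof (cases "h < m")
    case True
    have s: "{h<..<Suc m} = insert m {h<..<m}" using True by auto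
    have "(\<Sum>c\<in>{h<..<m}. (2::int)^(Suc m-1-c)) = (\<Sum>c\<in>{h<..<m}. 2 * 2^(m-1-c))"
      by (rule sum.cong) (auto simp: power_Suc[symmetric] Suc_diff_Suc)
    also have "\<dots> = 2 * (\<Sum>c\<in>{h<..<m}. (2::int)^(m-1-c))" by (rule sum_distrib_left[symmetric])
    also have "\<dots> = 2 * (2^(m-1-h) - 1)" using Suc.IH[OF True] by simp
    finally have e: "(\<Sum>c\<in>{h<..<m}. (2::int)^(Suc m-1-c)) = 2 * (2^(m-1-h) - 1)" .
    have "Suc m - 1 - h = Suc (m-1-h)" using True by simp
    then have "(2::int)^(Suc m - 1 - h) = 2 * 2^(m-1-h)" by simp
    then show ?thesis using e s by simp
  next
    case False
    then have "h = m" using Suc.prems by simp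
    then show ?thesis by simp
  qed
qed

lemma turn_iff:
  assumes "xs!a \<noteq> xs!b" "xs!b \<noteq> xs!c"
  shows "turn xs a b c \<longleftrightarrow> (xs!a < xs!b \<and> xs!c < xs!b) \<or> (xs!b < xs!a \<and> xs!b < xs!c)"
  using assms unfolding turn_def mult_less_0_iff by auto

lemma swap_improves:
  assumes S: "xs \<in> Sn n" and ij: "i<n" "j<n" and vi: "xs!i = k" and vj: "xs!j = Suc k"
    and L: "min i j > 0 \<Longrightarrow> (if i<j then xs!(i-1) < xs!i else xs!(j-1) > xs!j)"
    and R: "max i j + 1 < n \<Longrightarrow> (if i<j then xs!(j+1) > xs!j else xs!(i+1) < xs!i)"
    and nt: "min i j > 0 \<or> max i j + 1 < n"
  shows "\<exists>ys\<in>Sn n. tstat ys > tstat xs"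
proof -
  define ys where "ys = xs[i := xs!j, j := xs!i]"
  have len: "length xs = n"
  proof -
    have "distinct xs" "set xs = {1..n}" using S by (auto simp: Sn_def)
    then show ?thesis using distinct_card[of xs] by simp
  qed
  have dist: "distinct xs" using S by (simp add: Sn_def)
  have ysS: "ys \<in> Sn n" using S ij len unfolding ys_def Sn_def by simp
  have leny: "length ys = n" using len by (simp add: ys_def)
  have disty: "distinct ys" using ysS by (simp add: Sn_def)
  have ne: "i \<noteq> j" using vi vj by auto
  have ysn: "p < n \<Longrightarrow> ys!p = (if p = j then k else if p = i then Suc k else xs!p)" for p
    using len ij vi vj by (simp add: ys_def nth_list_update)
  have xsd: "p < n \<Longrightarrow> q < n \<Longrightarrow> p \<noteq> q \<Longrightarrow> xs!p \<noteq> xs!q" for p q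
    using dist len by (simp add: nth_eq_iff_index_eq)
  have ysd: "p < n \<Longrightarrow> q < n \<Longrightarrow> p \<noteq> q \<Longrightarrow> ys!p \<noteq> ys!q" for p q
    using disty leny by (simp add: nth_eq_iff_index_eq)
  have other: "p < n \<Longrightarrow> p \<noteq> i \<Longrightarrow> p \<noteq> j \<Longrightarrow> xs!p \<noteq> k \<and> xs!p \<noteq> Suc k" for p
    using xsd[of p i] xsd[of p j] ij vi vj by auto
  have cmp: "p < n \<Longrightarrow> q < n \<Longrightarrow> p \<noteq> q \<Longrightarrow> \<not>(p = i \<and> q = j) \<Longrightarrow> \<not>(p = j \<and> q = i)
     \<Longrightarrow> (ys!p < ys!q \<longleftrightarrow> xs!p < xs!q)" for p q
    using ysn[of p] ysn[of q] other[of p] other[of q] vi vj by auto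
  define lo where "lo = min i j"
  define hi where "hi = max i j"
  have lohi: "lo < hi" "hi < n" "{lo,hi} = {i,j}" using ne ij by (auto simp: lo_def hi_def)
  define w where "w = (\<lambda>(a::nat) (c::nat). (2::int)^a * 2^(n-1-c))"
  define d where "d = (\<lambda>(a,b,c). (if turn ys a b c then w a c else 0) - (if turn xs a b c then w a c else 0))"
  have wpos: "w a c > 0" for a c by (simp add: w_def)
  have dge: "d (a,b,c) \<ge> - w a c" for a b c using wpos[of a c] by (simp add: d_def)
  define T1 where "T1 = (\<lambda>c. (lo,hi,c)) ` {hi<..<n}"
  define T2 where "T2 = (\<lambda>a. (a,lo,hi)) ` {..<lo}"
  have zero: "t \<in> Trip n - (T1 \<union> T2) \<Longrightarrow> d t = 0" for t
  proof -
    assume t: "t \<in> Trip n - (T1 \<union> T2)"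
    obtain a b c where abc: "t = (a,b,c)" by (cases t)
    have o: "a<b" "b<c" "c<n" using t abc by (auto simp: Trip_def)
    have n1: "\<not>(a = lo \<and> b = hi)" using t abc o by (auto simp: T1_def)
    have n2: "\<not>(b = lo \<and> c = hi)" using t abc o by (auto simp: T2_def)
    have p1: "\<not>(a = i \<and> b = j) \<and> \<not>(a = j \<and> b = i)" using n1 o by (auto simp: lo_def hi_def)
    have p2: "\<not>(b = i \<and> c = j) \<and> \<not>(b = j \<and> c = i)" using n2 o by (auto simp: lo_def hi_def)
    have "turn ys a b c \<longleftrightarrow> turn xs a b c"
      using turn_iff[of xs a b c] turn_iff[of ys a b c] xsd[of a b] xsd[of b c] ysd[of a b] ysd[of b c]
        cmp[of a b] cmp[of b a] cmp[of b c] cmp[of c b] o p1 p2 by auto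
    then show "d t = 0" by (simp add: d_def abc)
  qed
  have T12: "T1 \<union> T2 \<subseteq> Trip n" using lohi by (auto simp: T1_def T2_def Trip_def)
  have "int (Wt ys) - int (Wt xs) = (\<Sum>t\<in>Trip n. d t)"
    unfolding Wt_def leny len d_def w_def
    by (simp add: sum_subtractf case_prod_beta of_nat_sum) (intro arg_cong2[where f=minus] sum.cong refl; simp)
  also have "\<dots> = (\<Sum>t\<in>T1 \<union> T2. d t)"
    by (rule sum.mono_neutral_right[OF finite_Trip T12]) (use zero in blast)
  also have "\<dots> = (\<Sum>t\<in>T1. d t) + (\<Sum>t\<in>T2. d t)"
    by (rule sum.union_disjoint) (use lohi in \<open>auto simp: T1_def T2_def\<close>)
  also have "(\<Sum>t\<in>T1. d t) = (\<Sum>c\<in>{hi<..<n}. d (lo,hi,c))"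
    unfolding T1_def by (simp add: sum.reindex inj_on_def)
  also have "(\<Sum>t\<in>T2. d t) = (\<Sum>a\<in>{..<lo}. d (a,lo,hi))"
    unfolding T2_def by (simp add: sum.reindex inj_on_def)
  finally have diff: "int (Wt ys) - int (Wt xs) = (\<Sum>c\<in>{hi<..<n}. d (lo,hi,c)) + (\<Sum>a\<in>{..<lo}. d (a,lo,hi))" .
  have s1: "(\<Sum>c\<in>{hi<..<n}. d (lo,hi,c)) \<ge> 0 \<and> (hi + 1 < n \<longrightarrow> (\<Sum>c\<in>{hi<..<n}. d (lo,hi,c)) > 0)"
  proof (cases "hi + 1 < n")
    case False
    then have "{hi<..<n} = {}" by auto
    then show ?thesis using False by simp
  next
    case True
    have dh: "d (lo,hi,hi+1) = w lo (hi+1)"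
    proof -
      have "turn ys lo hi (hi+1) \<and> \<not> turn xs lo hi (hi+1)"
      proof (cases "i < j")
        case True
        then have "lo = i" "hi = j" by (auto simp: lo_def hi_def)
        moreover have "xs!(j+1) > Suc k" using R True \<open>hi + 1 < n\<close> vj by (auto simp: hi_def)
        ultimately show ?thesis
          using turn_iff[of xs i j "j+1"] turn_iff[of ys i j "j+1"] ysn[of i] ysn[of j] ysn[of "j+1"] vi vj ij \<open>hi+1<n\<close> ne lohi
          by auto
      next
        case False
        then have "lo = j" "hi = i" using ne by (auto simp: lo_def hi_def)
        moreover have "xs!(i+1) < k" using R False \<open>hi + 1 < n\<close> vi ne by (auto simp: hi_def)
        ultimately show ?thesis
          using turn_iff[of xs j i "i+1"] turn_iff[of ys j i "i+1"] ysn[of i] ysn[of j] ysn[of "i+1"] vi vj ij \<open>hi+1<n\<close> ne lohi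
          by auto
      qed
      then show ?thesis by (simp add: d_def)
    qed
    have sp: "{hi<..<n} = insert (hi+1) {hi+1<..<n}" using True by auto
    have "(\<Sum>c\<in>{hi+1<..<n}. d (lo,hi,c)) \<ge> (\<Sum>c\<in>{hi+1<..<n}. - w lo c)"
      by (rule sum_mono) (rule dge)
    also have "(\<Sum>c\<in>{hi+1<..<n}. - w lo c) = - (2^lo * (\<Sum>c\<in>{hi+1<..<n}. 2^(n-1-c)))"
      by (simp add: w_def sum_distrib_left sum_negf)
    also have "\<dots> = - (2^lo * (2^(n-1-(hi+1)) - 1))" using geo1[OF True] by simp
    finally have r: "(\<Sum>c\<in>{hi+1<..<n}. d (lo,hi,c)) \<ge> - (2^lo * (2^(n-1-(hi+1)) - 1))" .
    have "(\<Sum>c\<in>{hi<..<n}. d (lo,hi,c)) = d (lo,hi,hi+1) + (\<Sum>c\<in>{hi+1<..<n}. d (lo,hi,c))"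
      unfolding sp by (rule sum.insert) auto
    also have "\<dots> \<ge> 2^lo * 2^(n-1-(hi+1)) - (2^lo * (2^(n-1-(hi+1)) - 1))"
      using r dh by (simp add: w_def)
    finally have "(\<Sum>c\<in>{hi<..<n}. d (lo,hi,c)) \<ge> 2^lo" by (simp add: algebra_simps)
    moreover have "(2::int)^lo > 0" by simp
    ultimately show ?thesis by linarith
  qed
  have s2: "(\<Sum>a\<in>{..<lo}. d (a,lo,hi)) \<ge> 0 \<and> (lo > 0 \<longrightarrow> (\<Sum>a\<in>{..<lo}. d (a,lo,hi)) > 0)"
  proof (cases "lo > 0")
    case False
    then show ?thesis by simp
  next
    case True
    have dh: "d (lo-1,lo,hi) = w (lo-1) hi"
    proof -
      have "turn ys (lo-1) lo hi \<and> \<not> turn xs (lo-1) lo hi"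
      proof (cases "i < j")
        case True
        then have "lo = i" "hi = j" by (auto simp: lo_def hi_def)
        moreover have "xs!(i-1) < k" using L True \<open>lo > 0\<close> vi by (auto simp: lo_def)
        ultimately show ?thesis
          using turn_iff[of xs "i-1" i j] turn_iff[of ys "i-1" i j] ysn[of i] ysn[of j] ysn[of "i-1"] vi vj ij \<open>lo>0\<close> ne lohi
          by auto
      next
        case False
        then have lj: "lo = j" "hi = i" using ne by (auto simp: lo_def hi_def)
        have "xs!(j-1) > Suc k" using L False \<open>lo > 0\<close> vj ne by (auto simp: lo_def)
        show ?thesis
        proof -
          have jj: "j - 1 \<noteq> i" "j - 1 \<noteq> j" "j - 1 < n" using lohi \<open>lo>0\<close> lj by auto
          have e: "ys!(j-1) = xs!(j-1)" "ys!j = k" "ys!i = Suc k" using ysn[of "j-1"] ysn[of i] ysn[of j] jj ij ne by auto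
          show ?thesis
            using turn_iff[of xs "j-1" j i] turn_iff[of ys "j-1" j i] e vi vj \<open>xs!(j-1) > Suc k\<close> lj
            by auto
        qed
      qed
      then show ?thesis by (simp add: d_def)
    qed
    have sp: "{..<lo} = insert (lo-1) {..<lo-1}" using True by auto
    have "(\<Sum>a\<in>{..<lo-1}. d (a,lo,hi)) \<ge> (\<Sum>a\<in>{..<lo-1}. - w a hi)"
      by (rule sum_mono) (rule dge)
    also have "(\<Sum>a\<in>{..<lo-1}. - w a hi) = - ((\<Sum>a\<in>{..<lo-1}. 2^a) * 2^(n-1-hi))"
      by (simp add: w_def sum_distrib_right sum_negf)
    also have "\<dots> = - ((2^(lo-1) - 1) * 2^(n-1-hi))" using geo2 by simp
    finally have r: "(\<Sum>a\<in>{..<lo-1}. d (a,lo,hi)) \<ge> - ((2^(lo-1) - 1) * 2^(n-1-hi))" .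
    have "(\<Sum>a\<in>{..<lo}. d (a,lo,hi)) = d (lo-1,lo,hi) + (\<Sum>a\<in>{..<lo-1}. d (a,lo,hi))"
      unfolding sp by (rule sum.insert) auto
    also have "\<dots> \<ge> 2^(lo-1) * 2^(n-1-hi) - ((2^(lo-1) - 1) * 2^(n-1-hi))"
      using r dh by (simp add: w_def)
    finally have "(\<Sum>a\<in>{..<lo}. d (a,lo,hi)) \<ge> 2^(n-1-hi)" by (simp add: algebra_simps)
    moreover have "(2::int)^(n-1-hi) > 0" by simp
    ultimately show ?thesis by linarith
  qed
  have "int (Wt ys) - int (Wt xs) > 0"
    using diff s1 s2 nt by (auto simp: lo_def hi_def)
  then have "Wt ys > Wt xs" by simp
  then have "tstat ys > tstat xs" using tstat_Wt[of ys] tstat_Wt[of xs] len leny by simp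
  then show ?thesis using ysS by blast
qed

lemma card_odd_int: "card {j::nat. 1<j \<and> j<n \<and> odd j} = (n-2) div 2"
proof (induction n)
  case 0 then show ?case by simp
next
  case (Suc n)
  have "{j::nat. 1<j \<and> j<Suc n \<and> odd j} = (if 1<n \<and> odd n then insert n {j. 1<j \<and> j<n \<and> odd j} else {j. 1<j \<and> j<n \<and> odd j})"
    by (auto simp: less_Suc_eq)
  have fin: "finite {j::nat. 1<j \<and> j<n \<and> odd j}" by simp
  show ?case
  proof (cases "1<n \<and> odd n")
    case True
    then have "card {j::nat. 1<j \<and> j<Suc n \<and> odd j} = Suc (card {j::nat. 1<j \<and> j<n \<and> odd j})"
      using \<open>{j::nat. 1<j \<and> j<Suc n \<and> odd j} = _\<close> fin by simp
    then show ?thesis using Suc.IH True by presburger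
  next
    case False
    then show ?thesis using Suc.IH \<open>{j::nat. 1<j \<and> j<Suc n \<and> odd j} = _\<close> by simp presburger
  qed
qed

lemma card_even_int: "card {j::nat. 1<j \<and> j<n \<and> even j} = (n-1) div 2"
proof (induction n)
  case 0 then show ?case by simp
next
  case (Suc n)
  have "{j::nat. 1<j \<and> j<Suc n \<and> even j} = (if 1<n \<and> even n then insert n {j. 1<j \<and> j<n \<and> even j} else {j. 1<j \<and> j<n \<and> even j})"
    by (auto simp: less_Suc_eq)
  have fin: "finite {j::nat. 1<j \<and> j<n \<and> even j}" by simp
  show ?case
  proof (cases "1<n \<and> even n")
    case True
    then have "card {j::nat. 1<j \<and> j<Suc n \<and> even j} = Suc (card {j::nat. 1<j \<and> j<n \<and> even j})"
      using \<open>{j::nat. 1<j \<and> j<Suc n \<and> even j} = _\<close> fin by simp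
    then show ?thesis using Suc.IH True by presburger
  next
    case False
    then show ?thesis using Suc.IH \<open>{j::nat. 1<j \<and> j<Suc n \<and> even j} = _\<close> by simp presburger
  qed
qed

lemma low_block:
  fixes V :: "nat set"
  assumes "V \<subseteq> {1..n}" "\<And>x y. x \<in> V \<Longrightarrow> y \<in> {1..n} \<Longrightarrow> y \<notin> V \<Longrightarrow> x < y"
  shows "V = {1..card V}"
proof -
  have fin: "finite V" using assms(1) finite_subset by blast
  have "V \<subseteq> {1..card V}"
  proof
    fix x assume x: "x \<in> V"
    have "{1..x} \<subseteq> V"
    proof
      fix y assume y: "y \<in> {1..x}"
      show "y \<in> V"
      proof (rule ccontr)
        assume "y \<notin> V"
        then have "x < y" using assms(2)[OF x, of y] y x assms(1) by auto
        then show False using y by auto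
      qed
    qed
    then have "card {1..x} \<le> card V" using fin by (rule card_mono[rotated])
    then show "x \<in> {1..card V}" using x assms(1) by auto
  qed
  then show ?thesis using card_subset_eq[of "{1..card V}" V] by simp
qed

lemma high_block:
  fixes P :: "nat set"
  assumes "P \<subseteq> {1..n}" "\<And>x y. x \<in> P \<Longrightarrow> y \<in> {1..n} \<Longrightarrow> y \<notin> P \<Longrightarrow> y < x"
  shows "P = {n+1-card P..n}"
proof -
  have fin: "finite P" using assms(1) finite_subset by blast
  have cP: "card P \<le> n" using card_mono[OF _ assms(1)] by simp
  have "P \<subseteq> {n+1-card P..n}"
  proof
    fix x assume x: "x \<in> P"
    have "{x..n} \<subseteq> P"
    proof
      fix y assume y: "y \<in> {x..n}"
      show "y \<in> P"
      proof (rule ccontr)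
        assume "y \<notin> P"
        then have "y < x" using assms(2)[OF x, of y] y x assms(1) by auto
        then show False using y by auto
      qed
    qed
    then have "card {x..n} \<le> card P" using fin by (rule card_mono[rotated])
    then show "x \<in> {n+1-card P..n}" using x assms(1) by auto
  qed
  moreover have "card {n+1-card P..n} = card P" using cP by simp
  ultimately show ?thesis using card_subset_eq[of "{n+1-card P..n}" P] by simp
qed

lemma Sn_length: "ys \<in> Sn n \<Longrightarrow> length ys = n"
proof -
  assume "ys \<in> Sn n"
  then have "distinct ys" "set ys = {1..n}" by (auto simp: Sn_def)
  then show ?thesis using distinct_card[of ys] by simp
qed

lemma finite_Sn: "finite (Sn n)"
proof -
  have "Sn n \<subseteq> {ys. set ys \<subseteq> {1..n} \<and> length ys = n}"
    using Sn_length by (auto simp: Sn_def)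
  then show ?thesis by (rule finite_subset) (rule finite_lists_length_eq, simp)
qed

lemma generic:
  assumes RC: "xs \<in> RC n" and n2: "2 \<le> n"
    and disj: "Lo \<inter> Hi = {}" and cover: "Lo \<union> Hi = {j. 1<j \<and> j<n}"
    and val: "\<And>j. j\<in>Lo \<Longrightarrow> xs!(j-1) < xs!(j-2) \<and> xs!(j-1) < xs!j"
    and pk: "\<And>j. j\<in>Hi \<Longrightarrow> xs!(j-2) < xs!(j-1) \<and> xs!j < xs!(j-1)"
  shows "(\<lambda>j. xs!(j-1)) ` Lo = {1..card Lo} \<and> (\<lambda>j. xs!(j-1)) ` Hi = {n+1-card Hi..n}
     \<and> {xs!0, xs!(n-1)} = {card Lo+1, card Lo+2}"
proof -
  have S: "xs \<in> Sn n" using RC by (simp add: RC_def)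
  have len: "length xs = n" using Sn_length[OF S] .
  have dist: "distinct xs" and setx: "set xs = {1..n}" using S by (auto simp: Sn_def)
  have maxim: "tstat ys \<le> tstat xs" if "ys \<in> Sn n" for ys
  proof -
    have "tstat ys \<le> Max (tstat ` Sn n)" using that finite_Sn by (intro Max_ge) auto
    then show ?thesis using RC by (simp add: RC_def)
  qed
  have inr: "q < n \<Longrightarrow> xs!q \<in> {1..n}" for q using setx len nth_mem by blast
  have pos: "v \<in> {1..n} \<Longrightarrow> \<exists>q<n. xs!q = v" for v using setx len by (metis in_set_conv_nth)
  have xsd: "p < n \<Longrightarrow> q < n \<Longrightarrow> xs!p = xs!q \<Longrightarrow> p = q" for p q
    using dist len by (simp add: nth_eq_iff_index_eq)
  define cls where "cls = (\<lambda>q. if Suc q \<in> Lo then 0 else if Suc q \<in> Hi then 2 else (1::nat))"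
  have c0: "0<q \<and> q+1<n \<and> xs!q < xs!(q-1) \<and> xs!q < xs!(q+1)" if "cls q = 0" for q
  proof -
    have "Suc q \<in> Lo" using that by (auto simp: cls_def split: if_splits)
    moreover then have "1 < Suc q" "Suc q < n" using cover by auto
    ultimately show ?thesis using val[of "Suc q"] by auto
  qed
  have c2: "0<q \<and> q+1<n \<and> xs!(q-1) < xs!q \<and> xs!(q+1) < xs!q" if "cls q = 2" for q
  proof -
    have "Suc q \<in> Hi" using that by (auto simp: cls_def split: if_splits)
    moreover then have "1 < Suc q" "Suc q < n" using cover by auto
    ultimately show ?thesis using pk[of "Suc q"] by auto
  qed
  have c1: "q = 0 \<or> q = n-1" if "cls q = 1" "q < n" for q
  proof (rule ccontr)
    assume "\<not> (q = 0 \<or> q = n-1)"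
    then have "Suc q \<in> {j. 1<j \<and> j<n}" using that(2) by auto
    then have "Suc q \<in> Lo \<or> Suc q \<in> Hi" using cover by blast
    then show False using that(1) unfolding cls_def by (auto split: if_splits)
  qed
  have cle: "cls q \<le> 2" for q by (simp add: cls_def)
  have cend: "cls 0 = 1" "cls (n-1) = 1" using cover n2 by (auto simp: cls_def)
  have step: "cls q1 \<le> cls q2" if q: "q1<n" "q2<n" "xs!q2 = Suc (xs!q1)" for q1 q2
  proof (rule ccontr)
    assume lt: "\<not> cls q1 \<le> cls q2"
    have L: "min q1 q2 > 0 \<Longrightarrow> (if q1<q2 then xs!(q1-1) < xs!q1 else xs!(q2-1) > xs!q2)"
    proof -
      assume m: "min q1 q2 > 0"
      show ?thesis
      proof (cases "q1 < q2")
        case True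
        then have "cls q1 \<noteq> 1" using c1[of q1] m q by auto
        then have "cls q1 = 2" using lt cle[of q1] by auto
        then show ?thesis using c2[of q1] True by auto
      next
        case False
        then have "q2 < q1" using q by (metis nat_neq_iff n_not_Suc_n)
        then have "cls q2 \<noteq> 1" using c1[of q2] m q by auto
        then have "cls q2 = 0" using lt cle[of q1] by auto
        then show ?thesis using c0[of q2] False by auto
      qed
    qed
    have R: "max q1 q2 + 1 < n \<Longrightarrow> (if q1<q2 then xs!(q2+1) > xs!q2 else xs!(q1+1) < xs!q1)"
    proof -
      assume m: "max q1 q2 + 1 < n"
      show ?thesis
      proof (cases "q1 < q2")
        case True
        then have "cls q2 \<noteq> 1" using c1[of q2] m q by auto
        then have "cls q2 = 0" using lt cle[of q1] by auto
        then show ?thesis using c0[of q2] True by auto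
      next
        case False
        then have "q2 < q1" using q by (metis nat_neq_iff n_not_Suc_n)
        then have "cls q1 \<noteq> 1" using c1[of q1] m q by auto
        then have "cls q1 = 2" using lt cle[of q1] by auto
        then show ?thesis using c2[of q1] False by auto
      qed
    qed
    have nt: "min q1 q2 > 0 \<or> max q1 q2 + 1 < n"
    proof (rule ccontr)
      assume "\<not> (min q1 q2 > 0 \<or> max q1 q2 + 1 < n)"
      then have "q1 \<in> {0, n-1}" "q2 \<in> {0, n-1}" using q by auto
      then show False using lt cend by auto
    qed
    obtain ys where "ys \<in> Sn n" "tstat ys > tstat xs"
      using swap_improves[OF S q(1,2) refl q(3) L R nt] by blast
    then show False using maxim by fastforce
  qed
  have mono_d: "\<forall>q1 q2. q1<n \<longrightarrow> q2<n \<longrightarrow> xs!q2 = xs!q1 + Suc d \<longrightarrow> cls q1 \<le> cls q2" for d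
  proof (induction d)
    case 0 then show ?case using step by simp
  next
    case (Suc d)
    show ?case
    proof (intro allI impI)
      fix q1 q2 assume q: "q1<n" "q2<n" "xs!q2 = xs!q1 + Suc (Suc d)"
      have "Suc (xs!q1) \<in> {1..n}" using inr[OF q(1)] inr[OF q(2)] q(3) by auto
      then obtain q3 where q3: "q3 < n" "xs!q3 = Suc (xs!q1)" using pos by blast
      have "cls q1 \<le> cls q3" using step q q3 by blast
      moreover have "cls q3 \<le> cls q2" using Suc.IH q q3 by auto
      ultimately show "cls q1 \<le> cls q2" by simp
    qed
  qed
  have mono: "cls q1 \<le> cls q2" if hq: "q1<n" "q2<n" "xs!q1 < xs!q2" for q1 q2
  proof -
    define d where "d = xs!q2 - xs!q1 - 1"
    have d: "xs!q2 = xs!q1 + Suc d" using hq(3) by (simp add: d_def)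
    show ?thesis by (rule mono_d[of d, rule_format, OF hq(1) hq(2) d])
  qed
  have strict: "xs!q1 < xs!q2" if "q1<n" "q2<n" "cls q1 < cls q2" for q1 q2
  proof (rule ccontr)
    assume "\<not> xs!q1 < xs!q2"
    moreover have "q1 \<noteq> q2" using that by auto
    then have "xs!q1 \<noteq> xs!q2" using xsd that by blast
    ultimately have "xs!q2 < xs!q1" by simp
    then show False using mono[of q2 q1] that by simp
  qed
  define f where "f = (\<lambda>j. xs!(j-1))"
  have Lo1: "j \<in> Lo \<Longrightarrow> 1 < j \<and> j < n" for j using cover by auto
  have Hi1: "j \<in> Hi \<Longrightarrow> 1 < j \<and> j < n" for j using cover by auto
  have clsLo: "j \<in> Lo \<Longrightarrow> cls (j-1) = 0" for j using Lo1[of j] by (simp add: cls_def)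
  have clsHi: "j \<in> Hi \<Longrightarrow> cls (j-1) = 2" for j using Hi1[of j] disj by (auto simp: cls_def)
  have V1: "f ` Lo \<subseteq> {1..n}"
  proof
    fix x assume "x \<in> f ` Lo"
    then obtain j where jj: "j \<in> Lo" "x = xs!(j-1)" by (auto simp: f_def)
    then have jl: "j - 1 < n" using Lo1[of j] by auto
    show "x \<in> {1..n}" using inr[OF jl] jj by simp
  qed
  have V2: "x < y" if hx: "x \<in> f ` Lo" and hy: "y \<in> {1..n}" and hz: "y \<notin> f ` Lo" for x y
  proof -
    obtain j where j: "j \<in> Lo" "x = xs!(j-1)" using hx by (auto simp: f_def)
    obtain q where q: "q < n" "y = xs!q" using pos hy by blast
    have "cls q \<noteq> 0"
    proof
      assume "cls q = 0"
      then have "Suc q \<in> Lo" by (auto simp: cls_def split: if_splits)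
      then have "y \<in> f ` Lo" using q by (auto simp: f_def intro!: image_eqI[where x="Suc q"])
      then show False using hz by simp
    qed
    then show ?thesis using strict[of "j-1" q] clsLo[OF j(1)] Lo1[OF j(1)] q j by auto
  qed
  have P1: "f ` Hi \<subseteq> {1..n}"
  proof
    fix x assume "x \<in> f ` Hi"
    then obtain j where jj: "j \<in> Hi" "x = xs!(j-1)" by (auto simp: f_def)
    then have jl: "j - 1 < n" using Hi1[of j] by auto
    show "x \<in> {1..n}" using inr[OF jl] jj by simp
  qed
  have P2: "y < x" if hx: "x \<in> f ` Hi" and hy: "y \<in> {1..n}" and hz: "y \<notin> f ` Hi" for x y
  proof -
    obtain j where j: "j \<in> Hi" "x = xs!(j-1)" using hx by (auto simp: f_def)
    obtain q where q: "q < n" "y = xs!q" using pos hy by blast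
    have "cls q \<noteq> 2"
    proof
      assume "cls q = 2"
      then have "Suc q \<in> Hi" by (auto simp: cls_def split: if_splits)
      then have "y \<in> f ` Hi" using q by (auto simp: f_def intro!: image_eqI[where x="Suc q"])
      then show False using hz by simp
    qed
    then have "cls q < 2" using cle[of q] by simp
    then show ?thesis using strict[of q "j-1"] clsHi[OF j(1)] Hi1[OF j(1)] q j by auto
  qed
  have injL: "inj_on f Lo"
  proof (rule inj_onI)
    fix a b assume ab: "a \<in> Lo" "b \<in> Lo" "f a = f b"
    have "a - 1 < n" "b - 1 < n" "1 < a" "1 < b" using Lo1[OF ab(1)] Lo1[OF ab(2)] by auto
    moreover then have "a - 1 = b - 1" using xsd[of "a-1" "b-1"] ab(3) by (simp add: f_def)
    ultimately show "a = b" by simp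
  qed
  have injH: "inj_on f Hi"
  proof (rule inj_onI)
    fix a b assume ab: "a \<in> Hi" "b \<in> Hi" "f a = f b"
    have "a - 1 < n" "b - 1 < n" "1 < a" "1 < b" using Hi1[OF ab(1)] Hi1[OF ab(2)] by auto
    moreover then have "a - 1 = b - 1" using xsd[of "a-1" "b-1"] ab(3) by (simp add: f_def)
    ultimately show "a = b" by simp
  qed
  have VV: "f ` Lo = {1..card Lo}" using low_block[OF V1 V2] card_image[OF injL] by simp
  have PP: "f ` Hi = {n+1-card Hi..n}" using high_block[OF P1 P2] card_image[OF injH] by simp
  define m where "m = card Lo"
  define h where "h = card Hi"
  have E1: "{xs!0, xs!(n-1)} \<subseteq> {m+1..n-h}"
  proof -
    have "m < xs!q \<and> xs!q < n+1-h" if "q = 0 \<or> q = n-1" for q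
    proof -
      have qn: "q < n" "cls q = 1" using that n2 cend by auto
      have a: "m < xs!q"
      proof (cases "m = 0")
        case True then show ?thesis using inr[OF qn(1)] by auto
      next
        case False
        then have "m \<in> f ` Lo" using VV m_def by auto
        then obtain j where jj: "j \<in> Lo" "m = xs!(j-1)" by (auto simp: f_def)
        then have "j - 1 < n" "cls (j-1) = 0" using clsLo[OF jj(1)] Lo1[OF jj(1)] by auto
        then show ?thesis using strict[of "j-1" q] qn jj by auto
      qed
      have b: "xs!q < n+1-h"
      proof (cases "h = 0")
        case True then show ?thesis using inr[OF qn(1)] by auto
      next
        case False
        have "h \<le> n" using card_mono[OF _ P1] card_image[OF injH] h_def by simp
        then have "n+1-h \<in> f ` Hi" using PP h_def False by auto
        then obtain j where jj: "j \<in> Hi" "n+1-h = xs!(j-1)" by (auto simp: f_def)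
        then have "j - 1 < n" "cls (j-1) = 2" using clsHi[OF jj(1)] Hi1[OF jj(1)] by auto
        then show ?thesis using strict[of q "j-1"] qn jj by auto
      qed
      show ?thesis using a b by simp
    qed
    then show ?thesis by fastforce
  qed
  have E2: "{m+1..n-h} \<subseteq> {xs!0, xs!(n-1)}"
  proof
    fix y assume y: "y \<in> {m+1..n-h}"
    then have yn: "y \<in> {1..n}" by auto
    obtain q where q: "q < n" "y = xs!q" using pos yn by blast
    have "cls q \<noteq> 0"
    proof
      assume "cls q = 0"
      then have "Suc q \<in> Lo" by (auto simp: cls_def split: if_splits)
      then have "y \<in> f ` Lo" using q by (auto simp: f_def intro!: image_eqI[where x="Suc q"])
      then show False using VV y m_def by auto
    qed
    moreover have "cls q \<noteq> 2"
    proof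
      assume "cls q = 2"
      then have "Suc q \<in> Hi" by (auto simp: cls_def split: if_splits)
      then have "y \<in> f ` Hi" using q by (auto simp: f_def intro!: image_eqI[where x="Suc q"])
      then show False using PP y h_def by auto
    qed
    ultimately have "cls q = 1" using cle[of q] by linarith
    then have "q = 0 \<or> q = n-1" using c1 q by blast
    then show "y \<in> {xs!0, xs!(n-1)}" using q by auto
  qed
  have EE: "{xs!0, xs!(n-1)} = {m+1..n-h}" using E1 E2 by blast
  have "xs!0 \<noteq> xs!(n-1)" using xsd[of 0 "n-1"] n2 by auto
  then have "card {xs!0, xs!(n-1)} = 2" by simp
  then have "n - h - m = 2" using EE by simp
  then have "{m+1..n-h} = {m+1, m+2}" by auto
  then show ?thesis using VV PP EE by (simp add: f_def m_def h_def)
qed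

lemma alt_val:
  assumes "alternating xs" "length xs = n" "1<j" "j<n" "odd j"
  shows "xs!(j-1) < xs!(j-2) \<and> xs!(j-1) < xs!j"
proof -
  obtain t where t: "j = Suc (Suc t)" using assms(3) by (metis less_imp_Suc_add add_Suc_right plus_1_eq_Suc)
  have a: "Suc t < n" "Suc (Suc t) < n" "odd t" using t assms by auto
  have "xs!t > xs!(Suc t)" using assms(1) a unfolding alternating_def
    by (metis Suc_eq_plus1 assms(2))
  moreover have "xs!(Suc t) < xs!(Suc (Suc t))" using assms(1) a unfolding alternating_def
    by (metis Suc_eq_plus1 assms(2) even_Suc)
  ultimately show ?thesis using t by simp
qed

lemma alt_peak:
  assumes "alternating xs" "length xs = n" "1<j" "j<n" "even j"
  shows "xs!(j-2) < xs!(j-1) \<and> xs!j < xs!(j-1)"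
proof -
  obtain t where t: "j = Suc (Suc t)" using assms(3) by (metis less_imp_Suc_add add_Suc_right plus_1_eq_Suc)
  have a: "Suc t < n" "Suc (Suc t) < n" "even t" using t assms by auto
  have "xs!t < xs!(Suc t)" using assms(1) a unfolding alternating_def
    by (metis Suc_eq_plus1 assms(2))
  moreover have "xs!(Suc t) > xs!(Suc (Suc t))" using assms(1) a unfolding alternating_def
    by (metis Suc_eq_plus1 assms(2) even_Suc)
  ultimately show ?thesis using t by simp
qed

lemma ralt_val:
  assumes "rev_alternating xs" "length xs = n" "1<j" "j<n" "even j"
  shows "xs!(j-1) < xs!(j-2) \<and> xs!(j-1) < xs!j"
proof -
  obtain t where t: "j = Suc (Suc t)" using assms(3) by (metis less_imp_Suc_add add_Suc_right plus_1_eq_Suc)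
  have a: "Suc t < n" "Suc (Suc t) < n" "even t" using t assms by auto
  have "xs!t > xs!(Suc t)" using assms(1) a unfolding rev_alternating_def
    by (metis Suc_eq_plus1 assms(2))
  moreover have "xs!(Suc t) < xs!(Suc (Suc t))" using assms(1) a unfolding rev_alternating_def
    by (metis Suc_eq_plus1 assms(2) even_Suc)
  ultimately show ?thesis using t by simp
qed

lemma ralt_peak:
  assumes "rev_alternating xs" "length xs = n" "1<j" "j<n" "odd j"
  shows "xs!(j-2) < xs!(j-1) \<and> xs!j < xs!(j-1)"
proof -
  obtain t where t: "j = Suc (Suc t)" using assms(3) by (metis less_imp_Suc_add add_Suc_right plus_1_eq_Suc)
  have a: "Suc t < n" "Suc (Suc t) < n" "odd t" using t assms by auto
  have "xs!t < xs!(Suc t)" using assms(1) a unfolding rev_alternating_def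
    by (metis Suc_eq_plus1 assms(2))
  moreover have "xs!(Suc t) > xs!(Suc (Suc t))" using assms(1) a unfolding rev_alternating_def
    by (metis Suc_eq_plus1 assms(2) even_Suc)
  ultimately show ?thesis using t by simp
qed

theorem mainTheorem4:
  fixes n :: nat and xs :: "nat list"
  defines "p \<equiv> \<lambda>j. xs ! (j - 1)"
  assumes "xs \<in> RC n"
  shows
   "(n \<ge> 3 \<and> odd n \<and> alternating xs \<longrightarrow>
       {p 1, p n} = {(n-1) div 2, (n+1) div 2} \<and>
       {p j | j. 1 < j \<and> j < n \<and> odd j} = {1..(n-3) div 2} \<and>
       {p j | j. 1 < j \<and> j < n \<and> even j} = {(n+3) div 2..n}) \<and>
    (n \<ge> 3 \<and> odd n \<and> rev_alternating xs \<longrightarrow>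
       {p 1, p n} = {(n+1) div 2, (n+3) div 2} \<and>
       {p j | j. 1 < j \<and> j < n \<and> odd j} = {(n+5) div 2..n} \<and>
       {p j | j. 1 < j \<and> j < n \<and> even j} = {1..(n-1) div 2}) \<and>
    (n \<ge> 2 \<and> even n \<and> alternating xs \<longrightarrow>
       {p 1, p n} = {n div 2, n div 2 + 1} \<and>
       {p j | j. 1 < j \<and> j < n \<and> odd j} = {1..n div 2 - 1} \<and>
       {p j | j. 1 < j \<and> j < n \<and> even j} = {n div 2 + 2..n}) \<and>
    (n \<ge> 2 \<and> even n \<and> rev_alternating xs \<longrightarrow>
       {p 1, p n} = {n div 2, n div 2 + 1} \<and>
       {p j | j. 1 < j \<and> j < n \<and> odd j} = {n div 2 + 2..n} \<and>
       {p j | j. 1 < j \<and> j < n \<and> even j} = {1..n div 2 - 1})"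
proof -
  have RC: "xs \<in> RC n" by fact
  have len: "length xs = n" using RC Sn_length by (simp add: RC_def)
  define Od where "Od = {j::nat. 1 < j \<and> j < n \<and> odd j}"
  define Ev where "Ev = {j::nat. 1 < j \<and> j < n \<and> even j}"
  have cO: "card Od = (n-2) div 2" unfolding Od_def by (rule card_odd_int)
  have cE: "card Ev = (n-1) div 2" unfolding Ev_def by (rule card_even_int)
  have dj: "Od \<inter> Ev = {}" "Ev \<inter> Od = {}" by (auto simp: Od_def Ev_def)
  have cv: "Od \<union> Ev = {j. 1<j \<and> j<n}" "Ev \<union> Od = {j. 1<j \<and> j<n}" by (auto simp: Od_def Ev_def)
  have so: "{p j | j. 1 < j \<and> j < n \<and> odd j} = (\<lambda>j. xs!(j-1)) ` Od" by (auto simp: Od_def p_def)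
  have se: "{p j | j. 1 < j \<and> j < n \<and> even j} = (\<lambda>j. xs!(j-1)) ` Ev" by (auto simp: Ev_def p_def)
  have pe: "{p 1, p n} = {xs!0, xs!(n-1)}" by (simp add: p_def)
  have c1: "n \<ge> 3 \<and> odd n \<and> alternating xs \<longrightarrow>
       {p 1, p n} = {(n-1) div 2, (n+1) div 2} \<and>
       {p j | j. 1 < j \<and> j < n \<and> odd j} = {1..(n-3) div 2} \<and>
       {p j | j. 1 < j \<and> j < n \<and> even j} = {(n+3) div 2..n}"
  proof
    assume h: "n \<ge> 3 \<and> odd n \<and> alternating xs"
    have g: "(\<lambda>j. xs!(j-1)) ` Od = {1..card Od} \<and> (\<lambda>j. xs!(j-1)) ` Ev = {n+1-card Ev..n}
     \<and> {xs!0, xs!(n-1)} = {card Od+1, card Od+2}"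
    proof (rule generic[OF RC _ dj(1) cv(1)])
      show "2 \<le> n" using h by simp
      show "\<And>j. j \<in> Od \<Longrightarrow> xs!(j-1) < xs!(j-2) \<and> xs!(j-1) < xs!j"
        using alt_val[OF _ len] h unfolding Od_def by blast
      show "\<And>j. j \<in> Ev \<Longrightarrow> xs!(j-2) < xs!(j-1) \<and> xs!j < xs!(j-1)"
        using alt_peak[OF _ len] h unfolding Ev_def by blast
    qed
    obtain m where m0: "n = 2*m+1" using h by (meson oddE)
    then have m: "n = 2*m+1" "m \<ge> 1" using h by auto
    show "{p 1, p n} = {(n-1) div 2, (n+1) div 2} \<and>
       {p j | j. 1 < j \<and> j < n \<and> odd j} = {1..(n-3) div 2} \<and>
       {p j | j. 1 < j \<and> j < n \<and> even j} = {(n+3) div 2..n}"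
    proof -
      have a: "(n-2) div 2 = m-1" "(n-3) div 2 = m-1" "(n-1) div 2 = m" "(n+1) div 2 = m+1"
        "(n+3) div 2 = m+2" "n+1-m = m+2" using m by auto
      have b: "m - 1 + 1 = m" "m - 1 + 2 = m + 1" using m by auto
      show ?thesis using g unfolding so se pe cO cE a b by simp
    qed
  qed
  have c2: "n \<ge> 3 \<and> odd n \<and> rev_alternating xs \<longrightarrow>
       {p 1, p n} = {(n+1) div 2, (n+3) div 2} \<and>
       {p j | j. 1 < j \<and> j < n \<and> odd j} = {(n+5) div 2..n} \<and>
       {p j | j. 1 < j \<and> j < n \<and> even j} = {1..(n-1) div 2}"
  proof
    assume h: "n \<ge> 3 \<and> odd n \<and> rev_alternating xs"
    have g: "(\<lambda>j. xs!(j-1)) ` Ev = {1..card Ev} \<and> (\<lambda>j. xs!(j-1)) ` Od = {n+1-card Od..n}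
     \<and> {xs!0, xs!(n-1)} = {card Ev+1, card Ev+2}"
    proof (rule generic[OF RC _ dj(2) cv(2)])
      show "2 \<le> n" using h by simp
      show "\<And>j. j \<in> Ev \<Longrightarrow> xs!(j-1) < xs!(j-2) \<and> xs!(j-1) < xs!j"
        using ralt_val[OF _ len] h unfolding Ev_def by blast
      show "\<And>j. j \<in> Od \<Longrightarrow> xs!(j-2) < xs!(j-1) \<and> xs!j < xs!(j-1)"
        using ralt_peak[OF _ len] h unfolding Od_def by blast
    qed
    obtain m where m0: "n = 2*m+1" using h by (meson oddE)
    then have m: "n = 2*m+1" "m \<ge> 1" using h by auto
    show "{p 1, p n} = {(n+1) div 2, (n+3) div 2} \<and>
       {p j | j. 1 < j \<and> j < n \<and> odd j} = {(n+5) div 2..n} \<and>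
       {p j | j. 1 < j \<and> j < n \<and> even j} = {1..(n-1) div 2}"
    proof -
      have a: "(n-2) div 2 = m-1" "(n-1) div 2 = m" "(n+1) div 2 = m+1"
        "(n+3) div 2 = m+2" "(n+5) div 2 = m+3" "n+1-(m-1) = m+3" using m by auto
      have b: "m + 1 = Suc m" using m by auto
      show ?thesis using g unfolding so se pe cO cE a b by simp
    qed
  qed
  have c3: "n \<ge> 2 \<and> even n \<and> alternating xs \<longrightarrow>
       {p 1, p n} = {n div 2, n div 2 + 1} \<and>
       {p j | j. 1 < j \<and> j < n \<and> odd j} = {1..n div 2 - 1} \<and>
       {p j | j. 1 < j \<and> j < n \<and> even j} = {n div 2 + 2..n}"
  proof
    assume h: "n \<ge> 2 \<and> even n \<and> alternating xs"
    have g: "(\<lambda>j. xs!(j-1)) ` Od = {1..card Od} \<and> (\<lambda>j. xs!(j-1)) ` Ev = {n+1-card Ev..n}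
     \<and> {xs!0, xs!(n-1)} = {card Od+1, card Od+2}"
    proof (rule generic[OF RC _ dj(1) cv(1)])
      show "2 \<le> n" using h by simp
      show "\<And>j. j \<in> Od \<Longrightarrow> xs!(j-1) < xs!(j-2) \<and> xs!(j-1) < xs!j"
        using alt_val[OF _ len] h unfolding Od_def by blast
      show "\<And>j. j \<in> Ev \<Longrightarrow> xs!(j-2) < xs!(j-1) \<and> xs!j < xs!(j-1)"
        using alt_peak[OF _ len] h unfolding Ev_def by blast
    qed
    obtain m where m0: "n = 2*m" using h by (meson evenE)
    then have m: "n = 2*m" "m \<ge> 1" using h by auto
    show "{p 1, p n} = {n div 2, n div 2 + 1} \<and>
       {p j | j. 1 < j \<and> j < n \<and> odd j} = {1..n div 2 - 1} \<and>
       {p j | j. 1 < j \<and> j < n \<and> even j} = {n div 2 + 2..n}"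
    proof -
      have a: "(n-2) div 2 = m-1" "(n-1) div 2 = m-1" "n div 2 = m" "n+1-(m-1) = m+2" using m by auto
      have b: "m - 1 + 1 = m" "m - 1 + 2 = m + 1" using m by auto
      show ?thesis using g unfolding so se pe cO cE a b by simp
    qed
  qed
  have c4: "n \<ge> 2 \<and> even n \<and> rev_alternating xs \<longrightarrow>
       {p 1, p n} = {n div 2, n div 2 + 1} \<and>
       {p j | j. 1 < j \<and> j < n \<and> odd j} = {n div 2 + 2..n} \<and>
       {p j | j. 1 < j \<and> j < n \<and> even j} = {1..n div 2 - 1}"
  proof
    assume h: "n \<ge> 2 \<and> even n \<and> rev_alternating xs"
    have g: "(\<lambda>j. xs!(j-1)) ` Ev = {1..card Ev} \<and> (\<lambda>j. xs!(j-1)) ` Od = {n+1-card Od..n}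
     \<and> {xs!0, xs!(n-1)} = {card Ev+1, card Ev+2}"
    proof (rule generic[OF RC _ dj(2) cv(2)])
      show "2 \<le> n" using h by simp
      show "\<And>j. j \<in> Ev \<Longrightarrow> xs!(j-1) < xs!(j-2) \<and> xs!(j-1) < xs!j"
        using ralt_val[OF _ len] h unfolding Ev_def by blast
      show "\<And>j. j \<in> Od \<Longrightarrow> xs!(j-2) < xs!(j-1) \<and> xs!j < xs!(j-1)"
        using ralt_peak[OF _ len] h unfolding Od_def by blast
    qed
    obtain m where m0: "n = 2*m" using h by (meson evenE)
    then have m: "n = 2*m" "m \<ge> 1" using h by auto
    show "{p 1, p n} = {n div 2, n div 2 + 1} \<and>
       {p j | j. 1 < j \<and> j < n \<and> odd j} = {n div 2 + 2..n} \<and>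
       {p j | j. 1 < j \<and> j < n \<and> even j} = {1..n div 2 - 1}"
    proof -
      have a: "(n-2) div 2 = m-1" "(n-1) div 2 = m-1" "n div 2 = m" "n+1-(m-1) = m+2" using m by auto
      have b: "m - 1 + 1 = m" "m - 1 + 2 = m + 1" using m by auto
      show ?thesis using g unfolding so se pe cO cE a b by simp
    qed
  qed
  show ?thesis using c1 c2 c3 c4 by blast
qed

end
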